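(* Let $n\ge 1$ and let $A=[a_{ij}]\in\{0,1\}^{2n\times 2n}$ be symmetric with zero diagonal, with row sums $r_i=\sum_j a_{ij}$. Then for each $i\in\{1,\dots,2n\}$, $$(\mathrm{hafn}\, A)^{\mathrm{hafn}\, A}\le r_i^{\mathrm{hafn}\, A}\prod_{j:\, a_{ij}=1}\big(\mathrm{hafn}\, A(i,j)\big)^{\mathrm{hafn}\, A(i,j)},$$ with the convention $0^0=1$.
   Context: For a real symmetric $2n\times 2n$ matrix $A=[a_{ij}]$, the hafnian is $\mathrm{hafn}\, A=\sum \prod_{k=1}^n a_{i_kj_k}$, where the sum runs over all partitions $\{\{i_1,j_1\},\dots,\{i_n,j_n\}\}$ of $\{1,\dots,2n\}$ into $n$ pairs (with $i_k<j_k$); the hafnian of the empty $0\times0$ matrix is $1$. $A(i,j)$ is the matrix obtained from $A$ by deleting rows $i,j$ and columns $i,j$. *)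

theory Defs
  imports Main "HOL-Library.Infinite_Set"
begin

definition perfect_matching :: "nat set \<Rightarrow> nat set set \<Rightarrow> bool" where
  "perfect_matching S M \<longleftrightarrow>
     (\<forall>e\<in>M. e \<subseteq> S \<and> card e = 2) \<and>
     (\<forall>e\<in>M. \<forall>e'\<in>M. e \<noteq> e' \<longrightarrow> e \<inter> e' = {}) \<and>
     \<Union>M = S"

definition hafn_on :: "(nat \<Rightarrow> nat \<Rightarrow> 'a::comm_semiring_1) \<Rightarrow> nat set \<Rightarrow> 'a" where
  "hafn_on A S = (\<Sum>M\<in>{M. perfect_matching S M}. \<Prod>e\<in>M. A (Min e) (Max e))"

(* hafnian of an m x m matrix A with (0-based) indices 0..m-1; hafn 0 A = 1 *)
definition hafn :: "nat \<Rightarrow> (nat \<Rightarrow> nat \<Rightarrow> 'a::comm_semiring_1) \<Rightarrow> 'a" where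
  "hafn m A = hafn_on A {0..<m}"

(* A(i,j): delete rows i,j and columns i,j, re-indexing the remaining ones in order *)
definition del2 :: "(nat \<Rightarrow> nat \<Rightarrow> 'a) \<Rightarrow> nat \<Rightarrow> nat \<Rightarrow> nat \<Rightarrow> nat \<Rightarrow> 'a" where
  "del2 A i j = (\<lambda>a b. A (enumerate (UNIV - {i, j}) a) (enumerate (UNIV - {i, j}) b))"

end

theory Submission
  imports Defs "HOL-Analysis.Analysis"
begin


lemma entropy_ineq_pos:
  fixes N :: "nat set" and h :: "nat \<Rightarrow> nat"
  assumes fin: "finite N" and ne: "N \<noteq> {}" and pos: "\<And>j. j \<in> N \<Longrightarrow> h j > 0"
  shows "(\<Sum>j\<in>N. h j) ^ (\<Sum>j\<in>N. h j) \<le> card N ^ (\<Sum>j\<in>N. h j) * (\<Prod>j\<in>N. h j ^ h j)"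
proof -
  define H where "H = (\<Sum>j\<in>N. h j)"
  obtain j0 where j0: "j0 \<in> N" using ne by auto
  have "h j0 \<le> H" unfolding H_def using fin j0 by (intro member_le_sum) auto
  hence Hpos: "H > 0" using pos[OF j0] by auto
  have sumH: "(\<Sum>j\<in>N. real (h j)) = real H" unfolding H_def by simp
  have "ln (\<Sum>j\<in>N. (real (h j) / H) *\<^sub>R (real H / h j)) \<ge> (\<Sum>j\<in>N. (real (h j) / H) * ln (real H / h j))"
  proof (rule concave_on_sum[OF fin ne ln_concave])
    show "(\<Sum>j\<in>N. real (h j) / real H) = 1" using Hpos
      by (simp add: sum_divide_distrib[symmetric] sumH)
    show "\<And>i. i \<in> N \<Longrightarrow> 0 \<le> real (h i) / real H" by simp
    show "\<And>i. i \<in> N \<Longrightarrow> real H / real (h i) \<in> {0<..}" using Hpos pos by auto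
  qed
  moreover have "(\<Sum>j\<in>N. (real (h j) / H) *\<^sub>R (real H / h j)) = real (card N)"
  proof -
    have "(\<Sum>j\<in>N. (real (h j) / H) *\<^sub>R (real H / h j)) = (\<Sum>j\<in>N. 1)"
      using Hpos pos by (intro sum.cong) (auto simp: field_simps)
    thus ?thesis by simp
  qed
  ultimately have A: "(\<Sum>j\<in>N. (real (h j) / H) * ln (real H / h j)) \<le> ln (card N)" by simp
  have "(\<Sum>j\<in>N. (real (h j) / H) * ln (real H / h j)) = (\<Sum>j\<in>N. (real (h j) / H) * (ln H - ln (h j)))"
    using Hpos pos by (intro sum.cong) (auto simp: ln_div)
  also have "\<dots> = (\<Sum>j\<in>N. (real (h j) / H)) * ln H - (\<Sum>j\<in>N. (real (h j) * ln (h j))) / H"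
    by (simp add: right_diff_distrib sum_subtractf sum_distrib_right sum_divide_distrib)
  also have "\<dots> = ln H - (\<Sum>j\<in>N. (real (h j) * ln (h j))) / H"
    using Hpos by (simp add: sum_divide_distrib[symmetric] sumH)
  finally have "ln H - (\<Sum>j\<in>N. (real (h j) * ln (h j))) / H \<le> ln (card N)"
    using A by simp
  hence "real H * (ln H - (\<Sum>j\<in>N. (real (h j) * ln (h j))) / H) \<le> real H * ln (card N)"
    using Hpos by (intro mult_left_mono) auto
  hence B: "real H * ln H \<le> real H * ln (card N) + (\<Sum>j\<in>N. (real (h j) * ln (h j)))"
    using Hpos by (simp add: right_diff_distrib)
  have cpos: "card N > 0" using fin ne by (simp add: card_gt_0_iff)
  have "ln (real (H ^ H)) = real H * ln H" using Hpos by (simp add: ln_realpow)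
  moreover have "ln (real (card N ^ H * (\<Prod>j\<in>N. h j ^ h j))) = real H * ln (card N) + (\<Sum>j\<in>N. (real (h j) * ln (h j)))"
  proof -
    have "ln (real (card N ^ H * (\<Prod>j\<in>N. h j ^ h j))) = ln (real (card N) ^ H) + ln (\<Prod>j\<in>N. real (h j) ^ h j)"
    proof -
      have "(\<Prod>j\<in>N. real (h j) ^ h j) > 0" using pos by (intro prod_pos) auto
      moreover have "real (card N) ^ H > 0" using cpos by simp
      ultimately show ?thesis by (simp add: ln_mult)
    qed
    also have "ln (\<Prod>j\<in>N. real (h j) ^ h j) = (\<Sum>j\<in>N. ln (real (h j) ^ h j))"
      using pos fin by (intro ln_prod) auto
    also have "\<dots> = (\<Sum>j\<in>N. (real (h j) * ln (h j)))"
      using pos by (intro sum.cong) (auto simp: ln_realpow)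
    finally show ?thesis using cpos by (simp add: ln_realpow)
  qed
  ultimately have "ln (real (H ^ H)) \<le> ln (real (card N ^ H * (\<Prod>j\<in>N. h j ^ h j)))" using B by simp
  hence "real (H ^ H) \<le> real (card N ^ H * (\<Prod>j\<in>N. h j ^ h j))"
    using Hpos cpos pos by (subst (asm) ln_le_cancel_iff) (auto simp: prod_pos)
  thus ?thesis unfolding H_def by linarith
qed

lemma entropy_ineq:
  fixes N :: "nat set" and h :: "nat \<Rightarrow> nat"
  assumes fin: "finite N"
  shows "(\<Sum>j\<in>N. h j) ^ (\<Sum>j\<in>N. h j) \<le> card N ^ (\<Sum>j\<in>N. h j) * (\<Prod>j\<in>N. h j ^ h j)"
proof -
  define N' where "N' = {j\<in>N. h j > 0}"
  have fin': "finite N'" using fin N'_def by auto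
  have s: "(\<Sum>j\<in>N. h j) = (\<Sum>j\<in>N'. h j)"
    using fin by (intro sum.mono_neutral_right) (auto simp: N'_def)
  have p: "(\<Prod>j\<in>N. h j ^ h j) = (\<Prod>j\<in>N'. h j ^ h j)"
    using fin by (intro prod.mono_neutral_right) (auto simp: N'_def)
  have c: "card N' \<le> card N" using fin by (intro card_mono) (auto simp: N'_def)
  have pge: "(\<Prod>j\<in>N'. h j ^ h j) \<ge> 1"
    by (intro prod_ge_1) (auto simp: N'_def)
  show ?thesis
  proof (cases "N' = {}")
    case True
    then show ?thesis using s p pge by simp
  next
    case False
    have "(\<Sum>j\<in>N'. h j) ^ (\<Sum>j\<in>N'. h j) \<le> card N' ^ (\<Sum>j\<in>N'. h j) * (\<Prod>j\<in>N'. h j ^ h j)"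
      using entropy_ineq_pos[OF fin' False] by (auto simp: N'_def)
    also have "\<dots> \<le> card N ^ (\<Sum>j\<in>N'. h j) * (\<Prod>j\<in>N'. h j ^ h j)"
      by (intro mult_right_mono power_mono c) auto
    finally show ?thesis using s p by simp
  qed
qed


lemma pm_finite_set: "finite S \<Longrightarrow> finite {M. perfect_matching S M}"
  by (rule finite_subset[of _ "Pow (Pow S)"]) (auto simp: perfect_matching_def)

lemma pm_finite: "finite S \<Longrightarrow> perfect_matching S M \<Longrightarrow> finite M"
  by (rule finite_subset[of _ "Pow S"]) (auto simp: perfect_matching_def)

lemma pm_notin: "perfect_matching T M \<Longrightarrow> i \<notin> T \<Longrightarrow> {i,j} \<notin> M"
  by (auto simp: perfect_matching_def)

lemma pm_insert:
  assumes "perfect_matching (S - {i,j}) M'" "i \<in> S" "j \<in> S" "i \<noteq> j"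
  shows "perfect_matching S (insert {i,j} M')"
  using assms unfolding perfect_matching_def by auto

lemma pm_remove:
  assumes pm: "perfect_matching S M" and i: "i \<in> S"
  shows "\<exists>j\<in>S-{i}. M = insert {i,j} (M - {{i,j}}) \<and> perfect_matching (S - {i,j}) (M - {{i,j}})"
proof -
  have "i \<in> \<Union>M" using pm i unfolding perfect_matching_def by simp
  then obtain e where e: "e \<in> M" "i \<in> e" by (rule UnionE)
  have eS: "e \<subseteq> S" "card e = 2" using pm e unfolding perfect_matching_def by auto
  then obtain x y where xy: "e = {x,y}" "x \<noteq> y" by (auto simp: card_Suc_eq numeral_2_eq_2)
  then obtain j where ej: "e = {i,j}" "j \<noteq> i" using e by auto
  have jS: "j \<in> S" using ej eS by auto
  have disj: "\<And>e'. e' \<in> M \<Longrightarrow> e' \<noteq> e \<Longrightarrow> e' \<inter> e = {}" using pm e unfolding perfect_matching_def by auto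
  have "perfect_matching (S - {i,j}) (M - {{i,j}})"
    unfolding perfect_matching_def
  proof (intro conjI ballI impI)
    fix e' assume "e' \<in> M - {{i,j}}"
    hence "e' \<in> M" "e' \<noteq> e" using ej by auto
    thus "e' \<subseteq> S - {i,j}" "card e' = 2" using disj[of e'] pm ej unfolding perfect_matching_def by auto
  next
    fix e' e'' assume "e' \<in> M - {{i,j}}" "e'' \<in> M - {{i,j}}" "e' \<noteq> e''"
    thus "e' \<inter> e'' = {}" using pm unfolding perfect_matching_def by auto
  next
    have pS: "\<Union>M = S" and pe: "\<And>e'. e' \<in> M \<Longrightarrow> e' \<subseteq> S" using pm unfolding perfect_matching_def by auto
    show "\<Union>(M - {{i, j}}) = S - {i, j}"
    proof
      show "\<Union>(M - {{i, j}}) \<subseteq> S - {i, j}"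
      proof
        fix x assume "x \<in> \<Union>(M - {{i, j}})"
        then obtain e' where e': "e' \<in> M" "e' \<noteq> e" "x \<in> e'" using ej by auto
        have "e' \<inter> e = {}" by (rule disj[OF e'(1,2)])
        thus "x \<in> S - {i, j}" using e' pe[OF e'(1)] ej by auto
      qed
      show "S - {i, j} \<subseteq> \<Union>(M - {{i, j}})"
      proof
        fix x assume x: "x \<in> S - {i, j}"
        then obtain e' where "e' \<in> M" "x \<in> e'" using pS by auto
        thus "x \<in> \<Union>(M - {{i, j}})" using x by auto
      qed
    qed
  qed
  moreover have "M = insert {i,j} (M - {{i,j}})" using e ej by auto
  ultimately show ?thesis using jS ej by auto
qed

lemma hafn_expand:
  fixes A :: "nat \<Rightarrow> nat \<Rightarrow> 'a::comm_semiring_1"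
  assumes fin: "finite S" and i: "i \<in> S" and sym: "\<forall>a\<in>S. \<forall>b\<in>S. A a b = A b a"
  shows "hafn_on A S = (\<Sum>j\<in>S-{i}. A i j * hafn_on A (S - {i,j}))"
proof -
  define P where "P j = insert {i,j} ` {M'. perfect_matching (S - {i,j}) M'}" for j
  have eq: "{M. perfect_matching S M} = (\<Union>j\<in>S-{i}. P j)"
  proof
    show "{M. perfect_matching S M} \<subseteq> (\<Union>j\<in>S-{i}. P j)"
    proof
      fix M assume "M \<in> {M. perfect_matching S M}"
      then obtain j where "j\<in>S-{i}" "M = insert {i,j} (M - {{i,j}})" "perfect_matching (S - {i,j}) (M - {{i,j}})"
        using pm_remove[OF _ i] by blast
      thus "M \<in> (\<Union>j\<in>S-{i}. P j)" unfolding P_def by blast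
    qed
    show "(\<Union>j\<in>S-{i}. P j) \<subseteq> {M. perfect_matching S M}"
      unfolding P_def using pm_insert i by blast
  qed
  have disj: "\<forall>j\<in>S-{i}. \<forall>k\<in>S-{i}. j \<noteq> k \<longrightarrow> P j \<inter> P k = {}"
  proof (intro ballI impI)
    fix j k assume j: "j\<in>S-{i}" and k: "k\<in>S-{i}" and jk: "j \<noteq> k"
    show "P j \<inter> P k = {}"
    proof (rule ccontr)
      assume "P j \<inter> P k \<noteq> {}"
      then obtain M1 M2 where M: "perfect_matching (S - {i,j}) M1" "perfect_matching (S - {i,k}) M2"
        "insert {i,j} M1 = insert {i,k} M2" unfolding P_def by blast
      hence "{i,j} \<in> insert {i,k} M2" by blast
      moreover have "{i,j} \<notin> M2" using pm_notin[OF M(2)] by auto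
      ultimately have "{i,j} = {i,k}" by blast
      thus False using jk j k by (auto simp: doubleton_eq_iff)
    qed
  qed
  have finP: "\<And>j. finite (P j)" unfolding P_def using fin by (auto intro: pm_finite_set)
  have "hafn_on A S = (\<Sum>j\<in>S-{i}. \<Sum>M\<in>P j. \<Prod>e\<in>M. A (Min e) (Max e))"
    unfolding hafn_on_def eq using fin finP disj by (intro sum.UNION_disjoint) auto
  also have "\<dots> = (\<Sum>j\<in>S-{i}. A i j * hafn_on A (S - {i,j}))"
  proof (rule sum.cong[OF refl])
    fix j assume j: "j \<in> S - {i}"
    have mm: "A (Min {i,j}) (Max {i,j}) = A i j"
    proof (cases "i < j")
      case True thus ?thesis by simp
    next
      case False hence "j < i" using j by auto
      thus ?thesis using sym i j by (simp add: insert_commute)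
    qed
    have inj: "inj_on (insert {i,j}) {M'. perfect_matching (S - {i,j}) M'}"
    proof (rule inj_onI)
      fix X Y assume "X \<in> {M'. perfect_matching (S - {i,j}) M'}" "Y \<in> {M'. perfect_matching (S - {i,j}) M'}"
        "insert {i,j} X = insert {i,j} Y"
      moreover have "{i,j} \<notin> X" "{i,j} \<notin> Y" using pm_notin calculation by auto
      ultimately show "X = Y" by (metis insert_ident)
    qed
    have "(\<Sum>M\<in>P j. \<Prod>e\<in>M. A (Min e) (Max e))
        = (\<Sum>M'\<in>{M'. perfect_matching (S - {i,j}) M'}. \<Prod>e\<in>insert {i,j} M'. A (Min e) (Max e))"
      unfolding P_def by (rule sum.reindex[OF inj, unfolded comp_def])
    also have "\<dots> = (\<Sum>M'\<in>{M'. perfect_matching (S - {i,j}) M'}. A i j * (\<Prod>e\<in>M'. A (Min e) (Max e)))"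
    proof (rule sum.cong[OF refl])
      fix M' assume "M' \<in> {M'. perfect_matching (S - {i,j}) M'}"
      hence "finite M'" "{i,j} \<notin> M'" using pm_finite[of "S - {i,j}"] fin pm_notin by auto
      thus "(\<Prod>e\<in>insert {i,j} M'. A (Min e) (Max e)) = A i j * (\<Prod>e\<in>M'. A (Min e) (Max e))"
        using mm by simp
    qed
    also have "\<dots> = A i j * hafn_on A (S - {i,j})"
      unfolding hafn_on_def by (simp add: sum_distrib_left)
    finally show "(\<Sum>M\<in>P j. \<Prod>e\<in>M. A (Min e) (Max e)) = A i j * hafn_on A (S - {i,j})" .
  qed
  finally show ?thesis .
qed

lemma hafn_on_reindex:
  fixes A :: "nat \<Rightarrow> nat \<Rightarrow> 'a::comm_semiring_1"
  assumes sm: "strict_mono f"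
  shows "hafn_on (\<lambda>a b. A (f a) (f b)) T = hafn_on A (f ` T)"
proof -
  have inj: "inj f" using sm by (rule strict_mono_imp_inj_on)
  have mono: "mono f" using sm by (rule strict_mono_mono)
  define g where "g = image (image f)"
  have injf: "inj (image f)" using inj by (simp add: inj_on_def inj_image_eq_iff)
  have injg: "inj_on g X" for X unfolding g_def
    by (rule inj_onI) (simp add: inj_image_eq_iff[OF injf])
  have img: "{M. perfect_matching (f ` T) M} = g ` {M. perfect_matching T M}"
  proof
    show "g ` {M. perfect_matching T M} \<subseteq> {M. perfect_matching (f ` T) M}"
    proof
      fix M assume "M \<in> g ` {M. perfect_matching T M}"
      then obtain M0 where M0: "perfect_matching T M0" "M = g M0" by auto
      have "perfect_matching (f ` T) (g M0)"
        unfolding perfect_matching_def g_def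
      proof (intro conjI ballI impI)
        fix e' assume "e' \<in> image f ` M0"
        then obtain e where e: "e \<in> M0" "e' = f ` e" by auto
        show "e' \<subseteq> f ` T" using e M0(1) unfolding perfect_matching_def by auto
        show "card e' = 2" using e M0(1) inj unfolding perfect_matching_def
          by (simp add: card_image inj_on_subset)
      next
        fix e' e'' assume "e' \<in> image f ` M0" "e'' \<in> image f ` M0" "e' \<noteq> e''"
        then obtain x y where "x \<in> M0" "y \<in> M0" "e' = f ` x" "e'' = f ` y" "x \<noteq> y"
          by auto
        moreover have "x \<inter> y = {}" using M0(1) calculation unfolding perfect_matching_def by auto
        ultimately show "e' \<inter> e'' = {}" using inj by (simp add: image_Int[symmetric])
      next
        show "\<Union>(image f ` M0) = f ` T" using M0(1) unfolding perfect_matching_def by auto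
      qed
      thus "M \<in> {M. perfect_matching (f ` T) M}" using M0 by simp
    qed
    show "{M. perfect_matching (f ` T) M} \<subseteq> g ` {M. perfect_matching T M}"
    proof
      fix M assume "M \<in> {M. perfect_matching (f ` T) M}"
      hence pm: "perfect_matching (f ` T) M" by simp
      define M0 where "M0 = (\<lambda>e. f -` e) ` M"
      have sub: "\<And>e. e \<in> M \<Longrightarrow> e \<subseteq> f ` T" using pm unfolding perfect_matching_def by auto
      have bk: "\<And>e. e \<in> M \<Longrightarrow> f ` (f -` e) = e" using sub by blast
      have "perfect_matching T M0"
        unfolding perfect_matching_def
      proof (intro conjI ballI impI)
        fix e' assume "e' \<in> M0"
        then obtain e where e: "e \<in> M" "e' = f -` e" unfolding M0_def by auto
        show "e' \<subseteq> T" using sub[OF e(1)] e(2) inj by (auto simp: inj_eq)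
        have "card e' = card (f ` e')" using inj by (simp add: card_image inj_on_subset)
        thus "card e' = 2" using bk[OF e(1)] e pm unfolding perfect_matching_def by auto
      next
        fix e' e'' assume "e' \<in> M0" "e'' \<in> M0" "e' \<noteq> e''"
        then obtain x y where "x \<in> M" "y \<in> M" "e' = f -` x" "e'' = f -` y" "x \<noteq> y"
          unfolding M0_def by auto
        moreover have "x \<inter> y = {}" using pm calculation unfolding perfect_matching_def by auto
        ultimately show "e' \<inter> e'' = {}" by auto
      next
        have "\<Union>M0 = f -` \<Union>M" unfolding M0_def by auto
        also have "\<dots> = f -` (f ` T)" using pm unfolding perfect_matching_def by simp
        also have "\<dots> = T" using inj by (simp add: inj_vimage_image_eq)
        finally show "\<Union>M0 = T" .
      qed
      moreover have "M = g M0" unfolding g_def M0_def image_image using bk by auto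
      ultimately show "M \<in> g ` {M. perfect_matching T M}" by auto
    qed
  qed
  have "hafn_on A (f ` T) = (\<Sum>M\<in>{M. perfect_matching T M}. \<Prod>e\<in>g M. A (Min e) (Max e))"
    unfolding hafn_on_def img by (rule sum.reindex[OF injg, unfolded comp_def])
  also have "\<dots> = (\<Sum>M\<in>{M. perfect_matching T M}. \<Prod>e\<in>M. A (f (Min e)) (f (Max e)))"
  proof (rule sum.cong[OF refl])
    fix M assume "M \<in> {M. perfect_matching T M}"
    hence c2: "\<And>e. e \<in> M \<Longrightarrow> card e = 2" unfolding perfect_matching_def by auto
    have fe: "\<And>e. e \<in> M \<Longrightarrow> finite e \<and> e \<noteq> {}"
    proof -
      fix e assume "e \<in> M" hence "card e = 2" by (rule c2)
      thus "finite e \<and> e \<noteq> {}" by (intro conjI card_ge_0_finite) auto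
    qed
    have "(\<Prod>e\<in>g M. A (Min e) (Max e)) = (\<Prod>e\<in>M. A (Min (f ` e)) (Max (f ` e)))"
      unfolding g_def by (rule prod.reindex[OF inj_on_subset[OF injf], unfolded comp_def]) auto
    also have "\<dots> = (\<Prod>e\<in>M. A (f (Min e)) (f (Max e)))"
      using fe by (intro prod.cong) (auto simp: mono_Min_commute[OF mono] mono_Max_commute[OF mono])
    finally show "(\<Prod>e\<in>g M. A (Min e) (Max e)) = (\<Prod>e\<in>M. A (f (Min e)) (f (Max e)))" .
  qed
  finally show ?thesis unfolding hafn_on_def by simp
qed

lemma enum_image:
  fixes i j m :: nat
  assumes "i < m" "j < m" "i \<noteq> j"
  shows "enumerate (UNIV - {i,j}) ` {0..<m-2} = {0..<m} - {i,j}"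
proof -
  let ?U = "UNIV - {i,j} :: nat set"
  let ?f = "enumerate ?U"
  have inf: "infinite ?U" by simp
  have sm: "strict_mono ?f" using inf by (simp add: strict_mono_def enumerate_mono)
  have cX: "card ({0..<m} - {i,j}) = m - 2" using assms by (simp add: card_Diff_subset)
  have sub: "{0..<m} - {i,j} \<subseteq> ?f ` {0..<m-2}"
  proof
    fix x assume x: "x \<in> {0..<m} - {i,j}"
    then obtain k where k: "?f k = x" using enumerate_Ex[OF inf] by auto
    have "?f ` {0..k} \<subseteq> {0..<m} - {i,j}"
    proof
      fix y assume "y \<in> ?f ` {0..k}"
      then obtain k' where "k' \<le> k" "y = ?f k'" by auto
      moreover have "?f k' \<le> ?f k" using \<open>k' \<le> k\<close> inf by simp
      moreover have "?f k' \<in> ?U" using inf by (rule enumerate_in_set)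
      ultimately show "y \<in> {0..<m} - {i,j}" using x k by auto
    qed
    hence "card (?f ` {0..k}) \<le> m - 2" using cX by (metis card_mono finite_Diff finite_atLeastLessThan)
    moreover have "card (?f ` {0..k}) = k + 1"
      using strict_mono_imp_inj_on[OF sm] by (simp add: card_image inj_on_subset)
    ultimately have "k < m - 2" by simp
    thus "x \<in> ?f ` {0..<m-2}" using k by auto
  qed
  have "card (?f ` {0..<m-2}) = m - 2"
    using strict_mono_imp_inj_on[OF sm] by (simp add: card_image inj_on_subset)
  hence "{0..<m} - {i,j} = ?f ` {0..<m-2}" using cX by (intro card_subset_eq[OF _ sub]) auto
  thus ?thesis by simp
qed


theorem lemma3p1:
  fixes n :: nat and A :: "nat \<Rightarrow> nat \<Rightarrow> nat" and i :: nat
  assumes "n \<ge> 1"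
    and "\<forall>a<2*n. \<forall>b<2*n. A a b \<in> {0, 1}"
    and "\<forall>a<2*n. \<forall>b<2*n. A a b = A b a"
    and "\<forall>a<2*n. A a a = 0"
    and "i < 2*n"
  shows "(hafn (2*n) A) ^ (hafn (2*n) A)
         \<le> (\<Sum>j<2*n. A i j) ^ (hafn (2*n) A) *
            (\<Prod>j\<in>{j. j < 2*n \<and> A i j = 1}.
               (hafn (2*n-2) (del2 A i j)) ^ (hafn (2*n-2) (del2 A i j)))"
proof -
  define S where "S = {0..<2*n}"
  define N where "N = {j. j < 2*n \<and> A i j = 1}"
  define h where "h j = hafn (2*n-2) (del2 A i j)" for j
  have iS: "i \<in> S" using assms(5) S_def by simp
  have finN: "finite N" unfolding N_def by simp
  have iN: "i \<notin> N" using assms(4,5) N_def by simp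
  have NS: "N \<subseteq> S - {i}" using iN unfolding N_def S_def by auto
  have hj: "h j = hafn_on A (S - {i,j})" if j: "j \<in> S - {i}" for j
  proof -
    let ?f = "enumerate (UNIV - {i,j})"
    have inf: "infinite (UNIV - {i,j} :: nat set)" by simp
    have sm: "strict_mono ?f" using inf by (simp add: strict_mono_def enumerate_mono)
    have "h j = hafn_on (\<lambda>a b. A (?f a) (?f b)) {0..<2*n-2}"
      unfolding h_def hafn_def del2_def by simp
    also have "\<dots> = hafn_on A (?f ` {0..<2*n-2})" by (rule hafn_on_reindex[OF sm])
    also have "?f ` {0..<2*n-2} = S - {i,j}"
      unfolding S_def using j assms(5) S_def by (intro enum_image) auto
    finally show ?thesis .
  qed
  have H: "hafn (2*n) A = (\<Sum>j\<in>N. h j)"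
  proof -
    have "hafn (2*n) A = (\<Sum>j\<in>S-{i}. A i j * hafn_on A (S - {i,j}))"
      unfolding hafn_def S_def[symmetric]
      by (rule hafn_expand) (use iS assms(3) S_def in auto)
    also have "\<dots> = (\<Sum>j\<in>S-{i}. A i j * h j)" using hj by simp
    also have "\<dots> = (\<Sum>j\<in>N. A i j * h j)"
    proof (rule sum.mono_neutral_right)
      show "finite (S - {i})" unfolding S_def by simp
      show "N \<subseteq> S - {i}" by (rule NS)
      show "\<forall>j\<in>S - {i} - N. A i j * h j = 0"
      proof
        fix j assume "j \<in> S - {i} - N"
        hence "A i j = 0" using assms(2,5) unfolding N_def S_def by force
        thus "A i j * h j = 0" by simp
      qed
    qed
    also have "\<dots> = (\<Sum>j\<in>N. h j)" unfolding N_def by simp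
    finally show ?thesis .
  qed
  have R: "(\<Sum>j<2*n. A i j) = card N"
  proof -
    have "(\<Sum>j<2*n. A i j) = (\<Sum>j\<in>N. A i j)"
    proof (rule sum.mono_neutral_right)
      show "finite {..<2*n}" by simp
      show "N \<subseteq> {..<2*n}" unfolding N_def by auto
      show "\<forall>j\<in>{..<2*n} - N. A i j = 0" using assms(2,5) unfolding N_def by force
    qed
    also have "\<dots> = (\<Sum>j\<in>N. 1)" unfolding N_def by simp
    finally show ?thesis by simp
  qed
  show ?thesis
    unfolding H R N_def[symmetric] h_def[symmetric]
    using entropy_ineq[OF finN, of h] H by simp
qed

end
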